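(* Fix a level $\ell$ with $SS_\ell>0$ and an integer shift $G$, let $B=2^b$, and write $W_\ell 2^G=q_\ell+f_\ell$ with $q_\ell=\lfloor W_\ell 2^G\rfloor$ and $f_\ell\in[0,1)$ (so $A_\ell(G)=q_\ell+1$). Conditioned on an outer iteration of the inter-level sampler reaching the boundary case $x=A_\ell(G)$ at level $\ell$, the refinement loop accepts level $\ell$ with probability exactly $f_\ell$ and abandons the outer iteration (restarting the procedure) with probability exactly $1-f_\ell$.
   Context: Fix an integer $b\ge 2$. There is a set $\mathcal L$ of $N$ levels, which are consecutive integers. Each level $\ell$ holds a finite (possibly empty) multiset of normalized significands, each an integer in $[2^{b-1},2^b)$. Let $z$ be the total number of stored significands over all levels; assume $z<2^b$. For each level, $SS_\ell$ is the sum of its significands (so $SS_\ell=0$ iff the level is empty); set $SS_\ell=0$ for integers $\ell\notin\mathcal L$. The level weight is $W_\ell=SS_\ell2^\ell$. For an integer global shift $G$, $A_\ell(G)=\lfloor W_\ell2^G\rfloor+1$ if $SS_\ell>0$ and $A_\ell(G)=0$ if $SS_\ell=0$; $A(G)=\sum_\ell A_\ell(G)$ and $M(G)=\sum_\ell W_\ell2^G$. The configuration is nonempty if $z\ge1$. Inter-level sampler (Algorithm 1), with shift $G$ and $A=A(G)$: it performs independent outer iterations. In an outer iteration, draw $x$ uniformly from $\{1,\dots,A\}$ and scan the levels in decreasing order starting from the largest nonempty level. At the current level $\ell$: if $x<A_\ell(G)$, return $\ell$; if $x=A_\ell(G)$, run the refinement loop for $m=1,2,\dots$: draw $r$ uniformly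 from $\{0,\dots,2^b-1\}$ independently, let $t=\lfloor SS_\ell 2^{\ell+G+mb}\rfloor \bmod 2^b$; if $r<t$ return $\ell$; else if $r>t$ or $\ell+G+mb\ge 0$, abandon this outer iteration and start a new one; otherwise continue with $m+1$. If $x>A_\ell(G)$, set $x\leftarrow x-A_\ell(G)$ and move to the next lower level. *)

theory Defs
  imports "HOL-Probability.Probability"
begin

text \<open>Refinement loop of the inter-level sampler (Algorithm 1) at level l with
  level significand sum SS, global shift G and precision b, started at round m.
  Result True = accept level l, False = abandon the outer iteration.\<close>

partial_function (spmf) refine :: "nat \<Rightarrow> nat \<Rightarrow> int \<Rightarrow> int \<Rightarrow> nat \<Rightarrow> bool spmf" where
  "refine b SS l G m =
     do {
       r \<leftarrow> spmf_of_set {0..<(2::nat)^b};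
       let t = nat (\<lfloor>real SS * 2 powr real_of_int (l + G + int m * int b)\<rfloor> mod 2^b);
       if r < t then return_spmf True
       else if r > t \<or> l + G + int m * int b \<ge> 0 then return_spmf False
       else refine b SS l G (Suc m)
     }"

definition level_weight :: "nat \<Rightarrow> int \<Rightarrow> real" where
  "level_weight SS l = real SS * 2 powr real_of_int l"

end

theory Submission
  imports Defs
begin

lemma sum3:
  fixes a c d :: real
  assumes "t < B"
  shows "(\<Sum>r\<in>{0..<B}. (if r<t then a else if t<r then c else d)) = real t * a + d + real (B-1-t) * c"
proof -
  let ?g = "\<lambda>r. (if r<t then a else if t<r then c else d)"
  have S: "{0..<B} = {0..<t} \<union> ({t} \<union> {t<..<B})" using assms by auto
  have "sum ?g {0..<B} = sum ?g {0..<t} + sum ?g ({t} \<union> {t<..<B})"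
    unfolding S by (rule sum.union_disjoint) auto
  also have "sum ?g ({t} \<union> {t<..<B}) = sum ?g {t} + sum ?g {t<..<B}"
    by (rule sum.union_disjoint) auto
  finally have "sum ?g {0..<B} = sum ?g {0..<t} + sum ?g {t} + sum ?g {t<..<B}" by simp
  moreover have "sum ?g {0..<t} = real t * a" by simp
  moreover have "sum ?g {t<..<B} = sum (\<lambda>_. c) {t<..<B}" by (rule sum.cong) auto
  moreover have "sum (\<lambda>_. c) {t<..<B} = real (B-1-t) * c" by simp
  ultimately show ?thesis by simp
qed

lemma fracstep:
  fixes Y :: real and b :: nat
  shows "frac (Y / 2^b) = real (nat (\<lfloor>Y\<rfloor> mod 2^b)) / 2^b + frac Y / 2^b"
proof -
  have B: "(0::int) \<le> 2^b" by simp
  have "\<lfloor>Y / real_of_int (2^b)\<rfloor> = \<lfloor>Y\<rfloor> div 2^b"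
    by (rule floor_divide_real_eq_div[OF B])
  hence f: "\<lfloor>Y / 2^b\<rfloor> = \<lfloor>Y\<rfloor> div 2^b" by simp
  have m0: "\<lfloor>Y\<rfloor> mod 2^b = \<lfloor>Y\<rfloor> - 2^b * (\<lfloor>Y\<rfloor> div 2^b)"
    by (simp add: minus_mult_div_eq_mod[symmetric])
  have m: "real_of_int (\<lfloor>Y\<rfloor> mod 2^b) = real_of_int \<lfloor>Y\<rfloor> - 2^b * real_of_int (\<lfloor>Y\<rfloor> div 2^b)"
    unfolding m0 by simp
  have nn: "real (nat (\<lfloor>Y\<rfloor> mod 2^b)) = real_of_int (\<lfloor>Y\<rfloor> mod 2^b)" by simp
  have alg: "Y' / B - q = (F - B * q) / B + (Y' - F) / B" if "B > 0" for Y' F q B :: real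
    using that by (simp add: field_simps)
  show ?thesis unfolding frac_def f nn m by (rule alg) simp
qed

lemma key:
  fixes b SS :: nat and l G :: int
  assumes "b \<ge> 1"
  shows "n = nat (-(l+G+int m*int b)) \<Longrightarrow>
    spmf (refine b SS l G m) True = frac (real SS * 2 powr real_of_int (l+G+int m*int b) / 2^b) \<and>
    spmf (refine b SS l G m) False = 1 - frac (real SS * 2 powr real_of_int (l+G+int m*int b) / 2^b)"
proof (induction n arbitrary: m rule: less_induct)
  case (less n)
  define e where "e = l+G+int m*int b"
  define Y where "Y = real SS * 2 powr real_of_int e"
  define t where "t = nat (\<lfloor>Y\<rfloor> mod 2^b)"
  define R where "R = refine b SS l G (Suc m)"
  have tB: "t < 2^b" unfolding t_def
    by (subst nat_less_iff) simp_all
  have eq: "refine b SS l G m = spmf_of_set {0..<(2::nat)^b} \<bind> (\<lambda>r.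
       if r < t then return_spmf True
       else if r > t \<or> e \<ge> 0 then return_spmf False
       else R)"
    unfolding t_def Y_def e_def R_def by (subst refine.simps) (simp only: Let_def)
  have sp: "spmf (refine b SS l G m) v = (\<Sum>r\<in>{0..<(2::nat)^b}. (if r < t then spmf (return_spmf True) v
       else if t < r then spmf (return_spmf False) v else (if e \<ge> 0 then spmf (return_spmf False) v else spmf R v))) / 2^b" for v
    unfolding eq spmf_bind integral_spmf_of_set
    by (intro arg_cong2[where f="(/)"] sum.cong) auto
  have d: "real (2^b - 1 - t) = 2^b - 1 - real t" using tB by (simp add: of_nat_diff)
  have B0: "(2::real)^b > 0" by simp
  have ff: "frac (Y / 2^b) = real t / 2^b + frac Y / 2^b" unfolding t_def by (rule fracstep)
  show ?case
  proof (cases "e \<ge> 0")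
    case True
    have "Y = real SS * 2 ^ nat e" unfolding Y_def using True
      by (simp add: powr_realpow[symmetric])
    hence "frac Y = 0" by (simp add: frac_def)
    hence ff': "frac (Y / 2^b) = real t / 2^b" using ff by simp
    have "spmf (refine b SS l G m) True = real t / 2^b"
      unfolding sp using True by (simp add: sum3[OF tB])
    moreover have "spmf (refine b SS l G m) False = 1 - real t / 2^b"
    proof -
      have "spmf (refine b SS l G m) False = (real (2^b - 1 - t) + 1) / 2^b"
        unfolding sp using True by (simp add: sum3[OF tB])
      also have "\<dots> = 1 - real t / 2^b" unfolding d using B0 by (simp add: field_simps)
      finally show ?thesis .
    qed
    ultimately show ?thesis using ff' by (simp add: Y_def e_def)
  next
    case False
    define n' where "n' = nat (-(l+G+int (Suc m)*int b))"
    have lt: "n' < n" using less.prems False assms unfolding n'_def e_def by (simp add: algebra_simps)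
    have IH: "spmf R True = frac (real SS * 2 powr real_of_int (l+G+int (Suc m)*int b) / 2^b)
       \<and> spmf R False = 1 - frac (real SS * 2 powr real_of_int (l+G+int (Suc m)*int b) / 2^b)"
      using less.IH[OF lt] n'_def R_def by simp
    have ex: "real_of_int (l+G+int (Suc m)*int b) = real_of_int e + real b"
      unfolding e_def by (simp add: algebra_simps)
    have "(2::real) powr real_of_int (l+G+int (Suc m)*int b) = 2 powr real_of_int e * 2 powr real b"
      unfolding ex by (simp add: powr_add)
    also have "\<dots> = 2 powr real_of_int e * 2 ^ b" by (simp add: powr_realpow)
    finally have "real SS * 2 powr real_of_int (l+G+int (Suc m)*int b) / 2^b = Y"
      unfolding Y_def using B0 by simp
    hence IH': "spmf R True = frac Y" "spmf R False = 1 - frac Y" using IH by auto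
    have "spmf (refine b SS l G m) True = (real t + frac Y) / 2^b"
      unfolding sp using False by (simp add: sum3[OF tB] IH')
    moreover have "spmf (refine b SS l G m) False = (real (2^b - 1 - t) + 1 - frac Y) / 2^b"
      unfolding sp using False by (simp add: sum3[OF tB] IH')
    moreover have "(real t + frac Y) / 2^b = frac (Y / 2^b)" using ff by (simp add: add_divide_distrib)
    moreover have "(real (2^b - 1 - t) + 1 - frac Y) / 2^b = 1 - frac (Y / 2^b)"
      unfolding d ff using B0 by (simp add: field_simps)
    ultimately show ?thesis unfolding Y_def e_def by simp
  qed
qed

theorem mainTheorem1:
  fixes b :: nat and S :: "nat multiset" and l G :: int
  assumes "b \<ge> 2"
    and "\<forall>s\<in>#S. 2^(b-1) \<le> s \<and> s < 2^b"
    and "size S < 2^b"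
    and "sum_mset S > 0"
  shows "spmf (refine b (sum_mset S) l G 1) True
           = frac (level_weight (sum_mset S) l * 2 powr real_of_int G)
       \<and> spmf (refine b (sum_mset S) l G 1) False
           = 1 - frac (level_weight (sum_mset S) l * 2 powr real_of_int G)"
proof -
  have b1: "b \<ge> 1" using assms(1) by simp
  have e: "real (sum_mset S) * 2 powr real_of_int (l+G+int 1*int b) / 2^b
     = level_weight (sum_mset S) l * 2 powr real_of_int G"
    unfolding level_weight_def
  proof -
    have "(2::real) powr real_of_int (l+G+int 1*int b) = 2 powr real_of_int l * 2 powr real_of_int G * 2 powr real b"
      by (simp add: powr_add[symmetric])
    also have "\<dots> = 2 powr real_of_int l * 2 powr real_of_int G * 2 ^ b" by (simp add: powr_realpow)
    finally show "real (sum_mset S) * 2 powr real_of_int (l+G+int 1*int b) / 2^b = real (sum_mset S) * 2 powr real_of_int l * 2 powr real_of_int G" by simp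
  qed
  show ?thesis using key[OF b1 refl, where m=1 and SS="sum_mset S" and l=l and G=G] unfolding e .
qed

end
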